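(* For positive integers $\ell,m$, let $A(\ell,m)$ be the $(\ell+m)\times(\ell+m)$ coloring matrix with entries $a_{ij}=0$ if $i,j>\ell$ and $a_{ij}=1$ otherwise (i.e., block form with an $\ell\times\ell$ all-ones upper-left block, all-ones off-diagonal blocks, and an $m\times m$ zero lower-right block). Then for all positive integers $\ell,m,n$, $$t_{A(\ell,m)}(n)=\sum_{k=0}^{n-1}\frac{2}{n}\binom{n}{k}\binom{2n-3}{n-k-1}\ell^{n-k}m^k;$$ for $1\le i\le\ell$, $$t_{A(\ell,m)}^{(i)}(n)=\sum_{k=0}^{n-1}\frac{1}{n}\binom{n}{k}\binom{2n-2}{n-k-1}\ell^{n-k-1}m^k;$$ and for $\ell+1\le i\le\ell+m$ and $n\ge2$, $$t_{A(\ell,m)}^{(i)}(n)=\sum_{k=1}^{n-1}\frac{1}{n-1}\binom{n-1}{k-1}\binom{2n-2}{n-k-1}\ell^{n-k}m^{k-1}.$$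
   Context: A plane tree is an unlabeled rooted tree in which the children of every vertex are linearly ordered. A coloring matrix is a square matrix $A=(a_{ij})$ with entries in $\{0,1\}$. An $A$-coloring of a plane tree assigns to each vertex a color (an index of a row of $A$) such that whenever a vertex of color $j$ is a child of a vertex of color $i$, $a_{ij}=1$. Let $t_A(n)$ be the number of pairs (plane tree with $n$ vertices, $A$-coloring of it) and $t_A^{(i)}(n)$ the number of those with root color $i$. Binomial coefficients $\binom{a}{b}$ with $b<0$ or $b>a\ge0$ are $0$. *)

theory Defs
  imports Complex_Main "HOL-Library.FuncSet"
begin

datatype ptree = PNode "ptree list"

text \<open>Vertices of a plane tree, addressed by their paths from the root
  (the root is the empty path; the i-th child of vertex p is p @ [i]).\<close>
function positions :: "ptree \<Rightarrow> nat list set" where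
  "positions (PNode ts) =
     insert [] (\<Union>i\<in>{..<length ts}. (Cons i) ` positions (ts ! i))"
  by pat_completeness auto
termination
  by (relation "measure size") (auto simp: less_Suc_eq_le intro!: size_list_estimation' nth_mem)

text \<open>Coloring matrix of size N given as a 0/1 function on indices 1..N.
  A-colorings of T: maps from vertices to colors {1..N} with a(c parent)(c child) = 1.\<close>
definition colorings :: "(nat \<Rightarrow> nat \<Rightarrow> nat) \<Rightarrow> nat \<Rightarrow> ptree \<Rightarrow> (nat list \<Rightarrow> nat) set" where
  "colorings a N T = {c \<in> positions T \<rightarrow>\<^sub>E {1..N}.
      \<forall>p i. p \<in> positions T \<and> p @ [i] \<in> positions T \<longrightarrow> a (c p) (c (p @ [i])) = 1}"

definition tA :: "(nat \<Rightarrow> nat \<Rightarrow> nat) \<Rightarrow> nat \<Rightarrow> nat \<Rightarrow> nat" where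
  "tA a N n = card {(T, c). card (positions T) = n \<and> c \<in> colorings a N T}"

definition tAi :: "(nat \<Rightarrow> nat \<Rightarrow> nat) \<Rightarrow> nat \<Rightarrow> nat \<Rightarrow> nat \<Rightarrow> nat" where
  "tAi a N i n = card {(T, c). card (positions T) = n \<and> c \<in> colorings a N T \<and> c [] = i}"

definition Alm :: "nat \<Rightarrow> nat \<Rightarrow> nat \<Rightarrow> nat \<Rightarrow> nat" where
  "Alm l m i j = (if l < i \<and> l < j then 0 else 1)"

end

theory Submission
  imports Defs "HOL-Computational_Algebra.Formal_Power_Series"
begin
unbundle fps_syntax


lemma key_coeff:
  fixes ph :: "real fps"
  assumes p0: "ph $ 0 = 1"
  shows "(ph ^ (p+1) * fps_deriv (fps_X * inverse ph)) $ p = (if p = 0 then 1 else 0)"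
proof (cases p)
  case 0
  have "inverse ph $ 0 = 1" using p0 by simp
  then show ?thesis using 0 p0 by (simp add: fps_mult_nth)
next
  case (Suc q)
  have inv: "ph * inverse ph = 1" using p0 by (simp add: inverse_mult_eq_1')
  have d: "fps_deriv (fps_X * inverse ph) = inverse ph - fps_X * fps_deriv ph * (inverse ph)\<^sup>2"
    using p0 by (simp add: fps_inverse_deriv)
  have "ph ^ (p+1) * fps_deriv (fps_X * inverse ph) =
        ph ^ q * (ph * inverse ph) * ph - fps_X * (fps_deriv ph * ph ^ q) * (ph * inverse ph)^2"
    unfolding d Suc by (simp add: algebra_simps power2_eq_square)
  also have "\<dots> = ph ^ (q+1) - fps_X * (fps_deriv ph * ph ^ q)"
    unfolding inv by simp
  finally have e: "ph ^ (p+1) * fps_deriv (fps_X * inverse ph) = ph ^ (q+1) - fps_X * (fps_deriv ph * ph ^ q)" .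
  have D: "fps_deriv (ph ^ Suc q) = fps_const (of_nat (Suc q)) * (fps_deriv ph * ph ^ q)"
    using fps_deriv_power[of ph "Suc q"] by (simp only: diff_Suc_1 mult.assoc)
  have "fps_deriv (ph ^ Suc q) $ q = of_nat (Suc q) * (ph ^ Suc q) $ Suc q"
    by (simp only: fps_deriv_nth Suc_eq_plus1)
  moreover have "fps_deriv (ph ^ Suc q) $ q = of_nat (Suc q) * (fps_deriv ph * ph ^ q) $ q"
    unfolding D by (simp only: fps_mult_left_const_nth)
  ultimately have "(ph ^ (q+1)) $ (q+1) = (fps_deriv ph * ph ^ q) $ q"
    by simp
  then show ?thesis unfolding e using Suc by simp
qed

lemma comp_mult_nth:
  fixes A B Q :: "real fps"
  shows "((A oo (fps_X * Q)) * B) $ N = (\<Sum>i=0..N. A $ i * (((fps_X * Q) ^ i) * B) $ N)"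
proof -
  let ?ps = "fps_X * Q"
  have z: "(?ps ^ i) $ k = 0" if "k < i" for i k
  proof -
    have "?ps ^ i = fps_X ^ i * Q ^ i" by (simp add: power_mult_distrib)
    then show ?thesis using that by (simp add: fps_X_power_mult_nth)
  qed
  have c: "(A oo ?ps) $ k = (\<Sum>i=0..N. A $ i * (?ps ^ i) $ k)" if "k \<le> N" for k
  proof -
    have "(A oo ?ps) $ k = (\<Sum>i=0..k. A $ i * (?ps ^ i) $ k)" by (simp add: fps_compose_nth)
    also have "\<dots> = (\<Sum>i=0..N. A $ i * (?ps ^ i) $ k)"
      by (rule sum.mono_neutral_left) (use that z in auto)
    finally show ?thesis .
  qed
  have "((A oo ?ps) * B) $ N = (\<Sum>k=0..N. (A oo ?ps) $ k * B $ (N - k))" by (simp add: fps_mult_nth)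
  also have "\<dots> = (\<Sum>k=0..N. \<Sum>i=0..N. A $ i * (?ps ^ i) $ k * B $ (N - k))"
    by (rule sum.cong) (auto simp: c sum_distrib_right)
  also have "\<dots> = (\<Sum>i=0..N. \<Sum>k=0..N. A $ i * (?ps ^ i) $ k * B $ (N - k))"
    by (rule sum.swap)
  also have "\<dots> = (\<Sum>i=0..N. A $ i * ((?ps ^ i) * B) $ N)"
    by (rule sum.cong) (auto simp: fps_mult_nth sum_distrib_left mult.assoc)
  finally show ?thesis .
qed

lemma lagrange:
  fixes ph A H :: "real fps"
  assumes p0: "ph $ 0 = 1" and comp: "A oo (fps_X * inverse ph) = H" and n: "n \<ge> 1"
  shows "of_nat n * A $ n = (fps_deriv H * ph ^ n) $ (n - 1)"
proof -
  let ?ps = "fps_X * inverse ph"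
  have psi0: "?ps $ 0 = 0" by simp
  have "fps_deriv H = (fps_deriv A oo ?ps) * fps_deriv ?ps"
    using fps_compose_deriv[OF psi0, of A] comp by simp
  then have "(fps_deriv H * ph ^ n) $ (n-1) = ((fps_deriv A oo ?ps) * (fps_deriv ?ps * ph ^ n)) $ (n-1)"
    by (simp add: mult.assoc)
  also have "\<dots> = (\<Sum>i=0..n-1. fps_deriv A $ i * ((?ps ^ i) * (fps_deriv ?ps * ph ^ n)) $ (n-1))"
    by (rule comp_mult_nth)
  also have "\<dots> = (\<Sum>i=0..n-1. fps_deriv A $ i * (if i = n - 1 then 1 else 0))"
  proof (rule sum.cong[OF refl])
    fix i assume i: "i \<in> {0..n-1}"
    have pw: "ph ^ n = ph ^ i * ph ^ (n - i)" using i n by (simp add: power_add[symmetric])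
    have ip: "(inverse ph) ^ i * ph ^ n = ph ^ ((n - 1 - i) + 1)"
    proof -
      have "(inverse ph) ^ i * ph ^ n = (inverse ph * ph) ^ i * ph ^ (n - i)"
        unfolding pw by (simp add: power_mult_distrib mult_ac)
      also have "\<dots> = ph ^ (n - i)" using inverse_mult_eq_1[of ph] p0 by simp
      also have "n - i = (n - 1 - i) + 1" using i n by auto
      finally show ?thesis .
    qed
    have "(?ps ^ i) * (fps_deriv ?ps * ph ^ n) = fps_X ^ i * (((inverse ph) ^ i * ph ^ n) * fps_deriv ?ps)"
      by (simp add: power_mult_distrib mult_ac)
    also have "\<dots> = fps_X ^ i * (ph ^ ((n - 1 - i) + 1) * fps_deriv ?ps)"
      unfolding ip ..
    finally have C: "(?ps ^ i) * (fps_deriv ?ps * ph ^ n) = fps_X ^ i * (ph ^ ((n - 1 - i) + 1) * fps_deriv ?ps)" .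
    have "((?ps ^ i) * (fps_deriv ?ps * ph ^ n)) $ (n-1) = (ph ^ ((n - 1 - i) + 1) * fps_deriv ?ps) $ (n - 1 - i)"
      unfolding C fps_X_power_mult_nth using i by (simp del: fps_deriv_mult)
    also have "\<dots> = (if i = n - 1 then 1 else 0)" using key_coeff[OF p0, of "n-1-i"] i by auto
    finally show "fps_deriv A $ i * ((?ps ^ i) * (fps_deriv ?ps * ph ^ n)) $ (n-1) = fps_deriv A $ i * (if i = n - 1 then 1 else 0)" by simp
  qed
  also have "\<dots> = (\<Sum>i=0..n-1. if i = n - 1 then fps_deriv A $ i else 0)"
    by (rule sum.cong) auto
  also have "\<dots> = fps_deriv A $ (n-1)" by (subst sum.delta) auto
  also have "\<dots> = of_nat n * A $ n" using n by simp
  finally show ?thesis by simp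
qed


lemma binom_coeff:
  "((1 + fps_const (c::real) * fps_X) ^ N) $ k = of_nat (N choose k) * c ^ k"
proof (induction N arbitrary: k)
  case 0
  then show ?case by (cases k) auto
next
  case (Suc N)
  let ?P = "(1 + fps_const c * fps_X) ^ N"
  have eq: "(1 + fps_const c * fps_X) ^ Suc N = ?P + fps_const c * (fps_X * ?P)"
    by (simp add: algebra_simps)
  have "((1 + fps_const c * fps_X) ^ Suc N) $ k = ?P $ k + c * (if k = 0 then 0 else ?P $ (k - 1))"
    unfolding eq by (simp only: fps_add_nth fps_mult_left_const_nth fps_X_mult_nth)
  also have "\<dots> = of_nat (N choose k) * c ^ k + c * (if k = 0 then 0 else of_nat (N choose (k - 1)) * c ^ (k - 1))"
    by (simp only: Suc.IH)
  finally show ?case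
    by (cases k) (simp_all add: algebra_simps)
qed

lemma mult_nth_zero:
  fixes P Q :: "real fps"
  assumes "P $ 0 = 0" "\<forall>k<n. Q $ k = 0"
  shows "(P * Q) $ n = 0" "(Q * P) $ n = 0"
proof -
  show "(P * Q) $ n = 0"
    unfolding fps_mult_nth
  proof (rule sum.neutral, rule ballI)
    fix x assume "x \<in> {0..n}"
    then show "P $ x * Q $ (n - x) = 0"
      using assms by (cases "x = 0") auto
  qed
  then show "(Q * P) $ n = 0" by (simp add: mult.commute)
qed

lemma uniq:
  fixes f g f0 g0 ps :: "real fps" and l m :: real
  assumes "f $ 0 = 0" "g $ 0 = 0" "f0 $ 0 = 0" "g0 $ 0 = 0"
   and "f = ps + (fps_const l * f + fps_const m * g) * f"
   and "g = ps + fps_const l * f * g"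
   and "f0 = ps + (fps_const l * f0 + fps_const m * g0) * f0"
   and "g0 = ps + fps_const l * f0 * g0"
  shows "f = f0 \<and> g = g0"
proof -
  let ?D = "f - f0" and ?E = "g - g0"
  have eD: "?D = (fps_const l * f + fps_const m * g) * ?D + (fps_const l * ?D + fps_const m * ?E) * f0"
    by (subst assms(5), subst assms(7)) (simp add: algebra_simps)
  have eE: "?E = fps_const l * f * ?E + fps_const l * ?D * g0"
    by (subst assms(6), subst assms(8)) (simp add: algebra_simps)
  have "?D $ n = 0 \<and> ?E $ n = 0" for n
  proof (induction n rule: less_induct)
    case (less n)
    have h1: "\<forall>k<n. ?D $ k = 0" "\<forall>k<n. ?E $ k = 0" using less by auto
    have h2: "\<forall>k<n. (fps_const l * ?D + fps_const m * ?E) $ k = 0" using h1 by simp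
    have "?D $ n = ((fps_const l * f + fps_const m * g) * ?D) $ n + ((fps_const l * ?D + fps_const m * ?E) * f0) $ n"
      by (subst eD) simp
    also have "\<dots> = 0"
      using mult_nth_zero(1)[of "fps_const l * f + fps_const m * g" n ?D] mult_nth_zero(2)[of f0 n "fps_const l * ?D + fps_const m * ?E"]
        h1 h2 assms(1-4) by simp
    finally have a: "?D $ n = 0" .
    have "?E $ n = ((fps_const l * f) * ?E) $ n + (fps_const l * ?D * g0) $ n"
      by (subst eE) simp
    also have "\<dots> = 0"
      using mult_nth_zero(1)[of "fps_const l * f" n ?E] mult_nth_zero(2)[of g0 n "fps_const l * ?D"]
        h1 assms(1-4) by simp
    finally show ?case using a by simp
  qed
  then show ?thesis by (simp add: fps_eq_iff)
qed


lemma alg_main: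
  fixes F G :: "real fps" and l m :: real and n :: nat
  assumes F0: "F $ 0 = 0" and G0: "G $ 0 = 0"
    and EF: "F = fps_X + (fps_const l * F + fps_const m * G) * F"
    and EG: "G = fps_X + fps_const l * F * G"
    and n: "n \<ge> 1"
  shows "F $ n = (\<Sum>k=0..n-1. 1 / real n * real (n choose k) * real ((2*n-2) choose (n-k-1))
                         * l ^ (n-k-1) * m ^ k)"
    and "n \<ge> 2 \<Longrightarrow> G $ n = (\<Sum>k=1..n-1. 1 / real (n-1) * real ((n-1) choose (k-1)) * real ((2*n-2) choose (n-k-1))
                         * l ^ (n-k) * m ^ (k-1))"
proof -
  define L where "L = 1 + fps_const l * fps_X"
  define M where "M = 1 + fps_const m * fps_X"
  define e where "e = inverse L"
  define u where "u = inverse M"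
  have eL: "e * L = 1" unfolding e_def by (rule inverse_mult_eq_1) (simp add: L_def)
  have uM: "u * M = 1" unfolding u_def by (rule inverse_mult_eq_1) (simp add: M_def)
  define ph where "ph = M * L ^ 2"
  have ph0: "ph $ 0 = 1" by (simp add: ph_def M_def L_def fps_power_zeroth)
  have invph: "inverse ph = u * e ^ 2"
  proof (rule fps_inverse_unique)
    have "ph * (u * e ^ 2) = (u * M) * (e * L) ^ 2" by (simp add: ph_def algebra_simps power2_eq_square)
    then show "ph * (u * e ^ 2) = 1" by (simp add: uM eL)
  qed
  define ps where "ps = fps_X * inverse ph"
  have ps0: "ps $ 0 = 0" by (simp add: ps_def)
  have pse: "ps = fps_X * u * e ^ 2" by (simp add: ps_def invph mult.assoc)
  define f where "f = F oo ps"
  define g where "g = G oo ps"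
  have "F oo ps = (fps_X + (fps_const l * F + fps_const m * G) * F) oo ps"
    using EF by (rule arg_cong)
  also have "\<dots> = ps + (fps_const l * f + fps_const m * g) * f"
    by (simp add: fps_compose_add_distrib fps_compose_mult_distrib[OF ps0] ps0 f_def g_def)
  finally have Ef: "f = ps + (fps_const l * f + fps_const m * g) * f" by (simp add: f_def)
  have "G oo ps = (fps_X + fps_const l * F * G) oo ps"
    using EG by (rule arg_cong)
  also have "\<dots> = ps + fps_const l * f * g"
    by (simp add: fps_compose_add_distrib fps_compose_mult_distrib[OF ps0] ps0 f_def g_def)
  finally have Eg: "g = ps + fps_const l * f * g" by (simp add: g_def)
  define f0 where "f0 = fps_X * e"
  define g0 where "g0 = fps_X * u * e"
  have "ps + fps_const l * f0 * g0 = fps_X * u * e * (e * L)"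
    by (simp add: pse f0_def g0_def L_def algebra_simps power2_eq_square)
  then have Eg0: "g0 = ps + fps_const l * f0 * g0" by (simp add: eL g0_def)
  have "ps + (fps_const l * f0 + fps_const m * g0) * f0 = fps_X * e * (e * (u * M + fps_const l * fps_X))"
    by (simp add: pse f0_def g0_def M_def algebra_simps power2_eq_square)
  also have "\<dots> = fps_X * e * (e * L)" by (simp add: uM L_def)
  finally have Ef0: "f0 = ps + (fps_const l * f0 + fps_const m * g0) * f0" by (simp add: eL f0_def)
  have "f = f0 \<and> g = g0"
    by (rule uniq[OF _ _ _ _ Ef Eg Ef0 Eg0]) (simp_all add: f_def g_def F0 G0 f0_def g0_def)
  then have ff0: "F oo ps = fps_X * e" by (simp add: f_def f0_def)
  have de: "fps_deriv e = - fps_const l * e ^ 2"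
    unfolding e_def using fps_inverse_deriv[of L] by (simp add: L_def)
  have "fps_deriv (fps_X * e) = e + fps_X * fps_deriv e" by simp
  also have "\<dots> = e * (e * L) - fps_X * fps_const l * e ^ 2"
    unfolding de eL by (simp add: algebra_simps del: fps_const_neg add: fps_const_neg[symmetric])
  also have "\<dots> = e ^ 2" by (simp add: L_def algebra_simps power2_eq_square)
  finally have dH: "fps_deriv (fps_X * e) = e ^ 2" .
  have Lp: "L ^ (2 * n) = L ^ (2*n-2) * L ^ 2" using n by (cases n) (simp_all add: power2_eq_square mult_ac)
  have php: "ph ^ n = M ^ n * L ^ (2 * n)" by (simp add: ph_def power_mult_distrib power_mult[symmetric] mult.commute)
  have "e ^ 2 * ph ^ n = M ^ n * L ^ (2*n-2) * (e * L) ^ 2"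
    unfolding php Lp by (simp only: power_mult_distrib mult_ac)
  then have eph: "e ^ 2 * ph ^ n = M ^ n * L ^ (2*n-2)" by (simp add: eL)
  have "real n * F $ n = (fps_deriv (fps_X * e) * ph ^ n) $ (n - 1)"
    by (rule lagrange[OF ph0 _ n]) (fact ff0[unfolded ps_def])
  also have "\<dots> = (M ^ n * L ^ (2*n-2)) $ (n-1)" unfolding dH eph ..
  also have "\<dots> = (\<Sum>k=0..n-1. real (n choose k) * m ^ k * (real ((2*n-2) choose (n-1-k)) * l ^ (n-1-k)))"
    by (simp add: fps_mult_nth M_def L_def binom_coeff)
  finally have Fn: "real n * F $ n = (\<Sum>k=0..n-1. real (n choose k) * m ^ k * (real ((2*n-2) choose (n-1-k)) * l ^ (n-1-k)))" .
  show "F $ n = (\<Sum>k=0..n-1. 1 / real n * real (n choose k) * real ((2*n-2) choose (n-k-1))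
                         * l ^ (n-k-1) * m ^ k)"
  proof -
    have "F $ n = 1 / real n * (real n * F $ n)" using n by simp
    also have "\<dots> = (\<Sum>k=0..n-1. 1 / real n * real (n choose k) * real ((2*n-2) choose (n-k-1))
                         * l ^ (n-k-1) * m ^ k)"
      unfolding Fn sum_distrib_left by (rule sum.cong) (auto simp: algebra_simps)
    finally show ?thesis .
  qed
  define K where "K = 1 - fps_const l * F"
  have K0: "K $ 0 = 1" by (simp add: K_def F0)
  define R where "R = F * inverse K"
  have RK: "R * K = F" unfolding R_def using inverse_mult_eq_1[of K] K0 by (simp add: mult.assoc)
  have "(R oo ps) * (1 - fps_const l * f) = f"
    using arg_cong[OF RK, of "\<lambda>x. x oo ps"]
    by (simp add: K_def fps_compose_mult_distrib[OF ps0] fps_compose_sub_distrib f_def)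
  moreover have "1 - fps_const l * f = e"
  proof -
    have "1 - fps_const l * f = e * L - fps_const l * (fps_X * e)" using \<open>f = f0 \<and> g = g0\<close> by (simp add: eL f0_def)
    also have "\<dots> = e" by (simp add: L_def algebra_simps)
    finally show ?thesis .
  qed
  ultimately have "(R oo ps) * e = fps_X * e" using ff0 f_def by simp
  then have "(R oo ps) * e * L = fps_X * e * L" by simp
  then have Rps: "R oo ps = fps_X" by (simp add: mult.assoc eL)
  have "G * K = fps_X" unfolding K_def using EG by (simp add: algebra_simps)
  then have Gi: "G = fps_X * inverse K"
    by (metis K0 inverse_mult_eq_1' mult.assoc mult.right_neutral one_neq_zero)
  have Ki: "inverse K = 1 + fps_const l * F * inverse K"
  proof -
    have "inverse K = inverse K * (K + fps_const l * F)" by (simp add: K_def)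
    also have "\<dots> = 1 + fps_const l * F * inverse K"
      using inverse_mult_eq_1[of K] K0 by (simp add: algebra_simps)
    finally show ?thesis .
  qed
  have "G = fps_X * (1 + fps_const l * F * inverse K)"
    using Gi arg_cong[OF Ki, of "(*) fps_X"] by (rule trans)
  then have GR: "G = fps_X + fps_const l * (fps_X * R)"
    by (simp add: R_def algebra_simps)
  assume n2: "n \<ge> 2"
  have n1: "n - 1 \<ge> 1" using n2 by simp
  have "real (n - 1) * R $ (n-1) = (fps_deriv fps_X * ph ^ (n-1)) $ (n - 1 - 1)"
    by (rule lagrange[OF ph0 _ n1]) (fact Rps[unfolded ps_def])
  also have "\<dots> = (M ^ (n-1) * L ^ (2*n-2)) $ (n-2)"
  proof -
    have i1: "n - 1 - 1 = n - 2" by arith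
    have i3: "2 * (n - 1) = 2 * n - 2" by arith
    have "ph ^ (n - 1) = M ^ (n - 1) * L ^ (2 * (n - 1))"
      unfolding ph_def by (simp only: power_mult_distrib power_mult[symmetric] mult.commute[of 2 "n - 1"])
    then have i2: "ph ^ (n - 1) = M ^ (n - 1) * L ^ (2 * n - 2)" unfolding i3 .
    show ?thesis unfolding i1 i2 by simp
  qed
  also have "\<dots> = (\<Sum>j=0..n-2. real ((n-1) choose j) * m ^ j * (real ((2*n-2) choose (n-2-j)) * l ^ (n-2-j)))"
    by (simp add: fps_mult_nth M_def L_def binom_coeff)
  finally have Rn: "real (n - 1) * R $ (n-1) = (\<Sum>j=0..n-2. real ((n-1) choose j) * m ^ j * (real ((2*n-2) choose (n-2-j)) * l ^ (n-2-j)))" .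
  have "G $ n = l * R $ (n-1)" using GR n2 by simp
  also have "\<dots> = l / real (n-1) * (real (n - 1) * R $ (n-1))" using n2 by simp
  also have "\<dots> = (\<Sum>j=0..n-2. 1 / real (n-1) * real ((n-1) choose j) * real ((2*n-2) choose (n-2-j)) * l ^ (n-1-j) * m ^ j)"
    unfolding Rn sum_distrib_left
  proof (rule sum.cong[OF refl])
    fix j assume j: "j \<in> {0..n-2}"
    then have "n-1-j = Suc (n-2-j)" using n2 by auto
    then have "l ^ (n-1-j) = l * l ^ (n-2-j)" by simp
    then show "l / real (n - 1) * (real (n - 1 choose j) * m ^ j * (real (2 * n - 2 choose (n - 2 - j)) * l ^ (n - 2 - j))) =
         1 / real (n - 1) * real (n - 1 choose j) * real (2 * n - 2 choose (n - 2 - j)) * l ^ (n - 1 - j) * m ^ j"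
      by simp
  qed
  also have "\<dots> = (\<Sum>k=1..n-1. 1 / real (n-1) * real ((n-1) choose (k-1)) * real ((2*n-2) choose (n-k-1))
                         * l ^ (n-k) * m ^ (k-1))"
  proof -
    have "{1..n-1} = {Suc 0..Suc (n-2)}" using n2 by auto
    then have "(\<Sum>k=1..n-1. 1 / real (n-1) * real ((n-1) choose (k-1)) * real ((2*n-2) choose (n-k-1))
                         * l ^ (n-k) * m ^ (k-1)) = (\<Sum>k=Suc 0..Suc (n-2). 1 / real (n-1) * real ((n-1) choose (k-1)) * real ((2*n-2) choose (n-k-1))
                         * l ^ (n-k) * m ^ (k-1))" by (rule arg_cong)
    also have "\<dots> = (\<Sum>j=0..n-2. 1 / real (n-1) * real ((n-1) choose (Suc j-1)) * real ((2*n-2) choose (n-Suc j-1))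
                         * l ^ (n-Suc j) * m ^ (Suc j-1))" by (rule sum.shift_bounds_cl_Suc_ivl)
    also have "\<dots> = (\<Sum>j=0..n-2. 1 / real (n-1) * real ((n-1) choose j) * real ((2*n-2) choose (n-2-j)) * l ^ (n-1-j) * m ^ j)"
    proof (rule sum.cong[OF refl])
      fix j assume "j \<in> {0..n-2}"
      then have e1: "Suc j - 1 = j" "n - Suc j - 1 = n - 2 - j" "n - Suc j = n - 1 - j" "n - 1 - j - 1 = n - 2 - j" by auto
      show "1 / real (n-1) * real ((n-1) choose (Suc j-1)) * real ((2*n-2) choose (n-Suc j-1))
                         * l ^ (n-Suc j) * m ^ (Suc j-1) = 1 / real (n-1) * real ((n-1) choose j) * real ((2*n-2) choose (n-2-j)) * l ^ (n-1-j) * m ^ j"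
        by (simp only: e1)
    qed
    finally show ?thesis by (rule sym)
  qed
  finally show "G $ n = (\<Sum>k=1..n-1. 1 / real (n-1) * real ((n-1) choose (k-1)) * real ((2*n-2) choose (n-k-1))
                         * l ^ (n-k) * m ^ (k-1))" .
qed


lemma nil_pos [simp]: "[] \<in> positions T"
  by (cases T) simp

lemma cons_pos [simp]: "(i # q \<in> positions (PNode ts)) = (i < length ts \<and> q \<in> positions (ts ! i))"
  by auto

lemma pos_leaf [simp]: "positions (PNode []) = {[]}"
  by simp

declare positions.simps [simp del]

lemma pos_Cons0 [simp]: "(0 # q \<in> positions (PNode (t # ts))) = (q \<in> positions t)"
  by simp

lemma pos_ConsSuc [simp]: "(Suc k # q \<in> positions (PNode (t # ts))) = (k # q \<in> positions (PNode ts))"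
  by simp

lemma finite_pos [simp]: "finite (positions T)"
proof (induction T rule: positions.induct)
  case (1 ts)
  then show ?case by (simp add: positions.simps)
qed

definition sh :: "nat list \<Rightarrow> nat list" where
  "sh p = (case p of [] \<Rightarrow> [] | k # q \<Rightarrow> Suc k # q)"

lemma pos_Cons_split:
  "positions (PNode (t # ts)) = Cons 0 ` positions t \<union> sh ` positions (PNode ts)"
proof (rule set_eqI)
  fix p
  show "p \<in> positions (PNode (t # ts)) \<longleftrightarrow> p \<in> Cons 0 ` positions t \<union> sh ` positions (PNode ts)"
  proof (cases p)
    case Nil
    then show ?thesis by (auto simp: sh_def image_iff intro: bexI[of _ "[]"])
  next
    case (Cons k q)
    show ?thesis
    proof (cases k)
      case 0
      then show ?thesis using Cons by (auto simp: sh_def split: list.splits)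
    next
      case (Suc k')
      have "Suc k' # q = sh (k' # q)" by (simp add: sh_def)
      then show ?thesis using Cons Suc by (auto simp: sh_def split: list.splits)
    qed
  qed
qed

lemma inj_sh: "inj sh"
  unfolding inj_def sh_def by (auto split: list.splits)

lemma card_pos_Cons:
  "card (positions (PNode (t # ts))) = card (positions t) + card (positions (PNode ts))"
proof -
  have d: "Cons 0 ` positions t \<inter> sh ` positions (PNode ts) = {}"
    by (auto simp: sh_def split: list.splits)
  have "card (positions (PNode (t # ts))) = card (Cons 0 ` positions t) + card (sh ` positions (PNode ts))"
    unfolding pos_Cons_split by (rule card_Un_disjoint) (auto simp: d)
  also have "\<dots> = card (positions t) + card (positions (PNode ts))"
    using inj_sh by (simp add: card_image inj_on_def inj_def)
  finally show ?thesis .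
qed

lemma card_pos_ge1: "card (positions T) \<ge> 1"
proof -
  have "0 < card (positions T)" using finite_pos[of T] nil_pos[of T] card_gt_0_iff by blast
  then show ?thesis by simp
qed

lemma card_pos_1: "card (positions T) = 1 \<Longrightarrow> T = PNode []"
proof (cases T)
  case (PNode ts)
  assume c: "card (positions T) = 1"
  show ?thesis
  proof (cases ts)
    case Nil then show ?thesis using PNode by simp
  next
    case (Cons t ts')
    then have "card (positions T) \<ge> 2" using PNode card_pos_Cons card_pos_ge1[of t] card_pos_ge1[of "PNode ts'"] by simp
    then show ?thesis using c by simp
  qed
qed

lemma colorings_iff:
  "c \<in> colorings a N T \<longleftrightarrow> c \<in> positions T \<rightarrow>\<^sub>E {1..N} \<and>
      (\<forall>p i. p \<in> positions T \<and> p @ [i] \<in> positions T \<longrightarrow> a (c p) (c (p @ [i])) = 1)"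
  by (simp add: colorings_def)

definition S :: "(nat \<Rightarrow> nat \<Rightarrow> nat) \<Rightarrow> nat \<Rightarrow> nat \<Rightarrow> nat \<Rightarrow> (ptree \<times> (nat list \<Rightarrow> nat)) set" where
  "S a N i n = {(T, c). card (positions T) = n \<and> c \<in> colorings a N T \<and> c [] = i}"

fun kids :: "ptree \<Rightarrow> ptree list" where
  "kids (PNode ts) = ts"

lemma PNode_kids: "PNode (kids T) = T"
  by (cases T) simp

definition join :: "(nat list \<Rightarrow> nat) \<Rightarrow> (nat list \<Rightarrow> nat) \<Rightarrow> nat list \<Rightarrow> nat" where
  "join c1 c2 p = (case p of [] \<Rightarrow> c2 [] | k # q \<Rightarrow> (case k of 0 \<Rightarrow> c1 q | Suc k' \<Rightarrow> c2 (k' # q)))"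

lemma join_simps [simp]:
  "join c1 c2 [] = c2 []" "join c1 c2 (0 # q) = c1 q" "join c1 c2 (Suc k # q) = c2 (k # q)"
  by (simp_all add: join_def)

definition Psi :: "(ptree \<times> (nat list \<Rightarrow> nat)) \<times> (ptree \<times> (nat list \<Rightarrow> nat)) \<Rightarrow> ptree \<times> (nat list \<Rightarrow> nat)" where
  "Psi x = (case x of ((t, c1), (T2, c2)) \<Rightarrow>
     (PNode (t # kids T2), restrict (join c1 c2) (positions (PNode (t # kids T2)))))"

definition Adec :: "(nat \<Rightarrow> nat \<Rightarrow> nat) \<Rightarrow> nat \<Rightarrow> nat \<Rightarrow> nat \<Rightarrow> _" where
  "Adec a N i n = (\<Union>k\<in>{1..<n}. (\<Union>j\<in>{j\<in>{1..N}. a i j = 1}. S a N j k) \<times> S a N i (n - k))"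

lemma S_0: "S a N i 0 = {}"
proof -
  have "card (positions T) \<noteq> 0" for T using card_pos_ge1[of T] by linarith
  then show ?thesis unfolding S_def by auto
qed

lemma S_1: "S a N i 1 = (if i \<in> {1..N} then {(PNode [], \<lambda>p. if p = [] then i else undefined)} else {})"
proof -
  have "(T, c) \<in> S a N i 1 \<longleftrightarrow> i \<in> {1..N} \<and> T = PNode [] \<and> c = (\<lambda>p. if p = [] then i else undefined)" for T c
  proof
    assume "(T, c) \<in> S a N i 1"
    then have T: "T = PNode []" and c: "c \<in> colorings a N T" and ci: "c [] = i"
      using card_pos_1 unfolding S_def by auto
    then have "c \<in> {[]} \<rightarrow>\<^sub>E {1..N}" by (simp add: colorings_iff)
    then show "i \<in> {1..N} \<and> T = PNode [] \<and> c = (\<lambda>p. if p = [] then i else undefined)"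
      using T ci by (auto simp: PiE_def extensional_def)
  next
    assume h: "i \<in> {1..N} \<and> T = PNode [] \<and> c = (\<lambda>p. if p = [] then i else undefined)"
    then show "(T, c) \<in> S a N i 1"
      by (auto simp: S_def colorings_iff PiE_def extensional_def)
  qed
  then show ?thesis by auto
qed


lemma S_1': "S a N i (Suc 0) = (if i \<in> {1..N} then {(PNode [], \<lambda>p. if p = [] then i else undefined)} else {})"
  using S_1[of a N i] by (simp only: One_nat_def)

lemma S_memI:
  assumes "card (positions T) = n" "c \<in> positions T \<rightarrow>\<^sub>E {1..N}"
    "\<And>p x. p \<in> positions T \<Longrightarrow> p @ [x] \<in> positions T \<Longrightarrow> a (c p) (c (p @ [x])) = 1"
    "c [] = i"
  shows "(T, c) \<in> S a N i n"
  using assms unfolding S_def colorings_iff by auto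

lemma S_memD:
  assumes "(T, c) \<in> S a N i n"
  shows "card (positions T) = n" "c \<in> positions T \<rightarrow>\<^sub>E {1..N}"
    "\<And>p x. p \<in> positions T \<Longrightarrow> p @ [x] \<in> positions T \<Longrightarrow> a (c p) (c (p @ [x])) = 1"
    "c [] = i"
  using assms unfolding S_def colorings_iff by auto

lemma Psi_into:
  assumes t: "(t, c1) \<in> S a N j k" and T2: "(T2, c2) \<in> S a N i k2" and aij: "a i j = 1"
  shows "Psi ((t, c1), (T2, c2)) \<in> S a N i (k + k2)"
proof -
  obtain ts where T2e: "T2 = PNode ts" by (cases T2) auto
  let ?T = "PNode (t # ts)"
  let ?c = "restrict (join c1 c2) (positions ?T)"
  have P: "Psi ((t, c1), (T2, c2)) = (?T, ?c)" by (simp add: Psi_def T2e)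
  note t' = S_memD[OF t] and T2' = S_memD[OF T2[unfolded T2e]]
  have "(?T, ?c) \<in> S a N i (k + k2)"
  proof (rule S_memI)
    show "card (positions ?T) = k + k2" using t'(1) T2'(1) by (simp add: card_pos_Cons)
    show "?c [] = i" using T2'(4) by simp
    show "?c \<in> positions ?T \<rightarrow>\<^sub>E {1..N}"
    proof (rule PiE_I)
      fix p assume p: "p \<in> positions ?T"
      show "?c p \<in> {1..N}"
      proof (cases p)
        case Nil then show ?thesis using T2'(2) by (auto simp: PiE_def Pi_def)
      next
        case (Cons k' q)
        then show ?thesis using p t'(2) T2'(2) by (cases k') (auto simp: PiE_def Pi_def)
      qed
    qed simp
    fix p x assume p: "p \<in> positions ?T" and px: "p @ [x] \<in> positions ?T"
    show "a (?c p) (?c (p @ [x])) = 1"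
    proof (cases p)
      case Nil
      show ?thesis
      proof (cases x)
        case 0 then show ?thesis using Nil t'(4) T2'(4) aij by simp
      next
        case (Suc x')
        then have "[x'] \<in> positions (PNode ts)" using px Nil by simp
        then show ?thesis using Nil Suc T2'(3)[of "[]" x'] by simp
      qed
    next
      case (Cons k' q)
      show ?thesis
      proof (cases k')
        case 0
        then have "q \<in> positions t" "q @ [x] \<in> positions t" using p px Cons by auto
        then show ?thesis using Cons 0 t'(3)[of q x] by simp
      next
        case (Suc k'')
        then have "k'' # q \<in> positions (PNode ts)" "(k'' # q) @ [x] \<in> positions (PNode ts)" using p px Cons by auto
        then show ?thesis using Cons Suc T2'(3)[of "k'' # q" x] by simp
      qed
    qed
  qed
  then show ?thesis using P by simp
qed

lemma S_ext:
  assumes "(T, c) \<in> S a N i n" shows "c \<in> extensional (positions T)"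
  using S_memD(2)[OF assms] by (simp add: PiE_iff)

lemma Psi_inj: "inj_on Psi {((t, c1), (T2, c2)). c1 \<in> extensional (positions t) \<and> c2 \<in> extensional (positions T2)}"
proof (rule inj_onI)
  fix x y
  assume x: "x \<in> {((t, c1), (T2, c2)). c1 \<in> extensional (positions t) \<and> c2 \<in> extensional (positions T2)}"
    and y: "y \<in> {((t, c1), (T2, c2)). c1 \<in> extensional (positions t) \<and> c2 \<in> extensional (positions T2)}"
    and eqxy: "Psi x = Psi y"
  obtain t c1 T2 c2 where xe: "x = ((t, c1), (T2, c2))" by (metis prod.collapse)
  obtain t' c1' T2' c2' where ye: "y = ((t', c1'), (T2', c2'))" by (metis prod.collapse)
  have e1: "c1 \<in> extensional (positions t)" and e2: "c2 \<in> extensional (positions T2)" using x xe by auto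
  have e1': "c1' \<in> extensional (positions t')" and e2': "c2' \<in> extensional (positions T2')" using y ye by auto
  have eq: "Psi ((t, c1), T2, c2) = Psi ((t', c1'), T2', c2')" using eqxy xe ye by simp
  obtain ts where T2e: "T2 = PNode ts" by (cases T2) auto
  obtain ts' where T2e': "T2' = PNode ts'" by (cases T2') auto
  have E0: "(PNode (t # ts), restrict (join c1 c2) (positions (PNode (t # ts)))) = (PNode (t' # ts'), restrict (join c1' c2') (positions (PNode (t' # ts'))))"
    using eq by (simp only: Psi_def T2e T2e' prod.case kids.simps)
  then have tt: "t = t'" and tss: "ts = ts'" by simp_all
  have ceq: "restrict (join c1 c2) (positions (PNode (t # ts))) = restrict (join c1' c2') (positions (PNode (t' # ts')))"
    using arg_cong[OF E0, of snd] by (simp only: snd_conv)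
  have "t = t' \<and> c1 = c1' \<and> T2 = T2' \<and> c2 = c2'"
  proof (intro conjI)
    show "t = t'" by fact
    show "T2 = T2'" using T2e T2e' tss by simp
    show "c1 = c1'"
    proof
      fix q
      show "c1 q = c1' q"
      proof (cases "q \<in> positions t")
        case True
        then have "0 # q \<in> positions (PNode (t # ts))" by simp
        then show ?thesis using fun_cong[OF ceq, of "0 # q"] tt tss by simp
      next
        case False then show ?thesis using e1 e1' tt by (simp add: extensional_def)
      qed
    qed
    show "c2 = c2'"
    proof
      fix q
      show "c2 q = c2' q"
      proof (cases "q \<in> positions T2")
        case True
        show ?thesis
        proof (cases q)
          case Nil
          then show ?thesis using fun_cong[OF ceq, of "[]"] tt tss by simp
        next
          case (Cons k r)
          then have "Suc k # r \<in> positions (PNode (t # ts))" using True T2e by simp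
          then show ?thesis using fun_cong[OF ceq, of "Suc k # r"] tt tss Cons by simp
        qed
      next
        case False then show ?thesis using e2 e2' T2e T2e' tss by (simp add: extensional_def)
      qed
    qed
  qed
  then show "x = y" using xe ye by simp
qed


lemma Adec_memD:
  assumes "((t, c1), (T2, c2)) \<in> Adec a N i n"
  shows "\<exists>k j. k \<in> {1..<n} \<and> j \<in> {1..N} \<and> a i j = 1 \<and> (t, c1) \<in> S a N j k \<and> (T2, c2) \<in> S a N i (n - k)"
  using assms unfolding Adec_def by blast

lemma Psi_onto:
  assumes m: "(T, c) \<in> S a N i n" and n2: "n \<ge> 2"
  shows "(T, c) \<in> Psi ` Adec a N i n"
proof -
  note cm = S_memD[OF m]
  obtain ts0 where T0: "T = PNode ts0" by (cases T) auto
  have "ts0 \<noteq> []" using cm(1) n2 T0 by auto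
  then obtain t ts where T: "T = PNode (t # ts)" using T0 by (cases ts0) auto
  define c1 where "c1 = restrict (\<lambda>q. c (0 # q)) (positions t)"
  define c2 where "c2 = restrict (\<lambda>q. case q of [] \<Rightarrow> c [] | k # r \<Rightarrow> c (Suc k # r)) (positions (PNode ts))"
  define k where "k = card (positions t)"
  define j where "j = c [0]"
  have cardn: "n = k + card (positions (PNode ts))" using cm(1) T by (simp add: card_pos_Cons k_def)
  have k1: "k \<ge> 1" unfolding k_def by (rule card_pos_ge1)
  have kn: "k < n" using cardn card_pos_ge1[of "PNode ts"] by simp
  have p0: "[0] \<in> positions T" using T by simp
  have jN: "j \<in> {1..N}" using cm(2) p0 unfolding j_def by (auto simp: PiE_def Pi_def)
  have aij: "a i j = 1" using cm(3)[of "[]" 0] cm(4) p0 unfolding j_def by simp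
  have m1: "(t, c1) \<in> S a N j k"
  proof (rule S_memI)
    show "card (positions t) = k" by (simp add: k_def)
    show "c1 [] = j" by (simp add: c1_def j_def)
    show "c1 \<in> positions t \<rightarrow>\<^sub>E {1..N}"
      unfolding c1_def using cm(2) T by (auto simp: PiE_def Pi_def)
    fix p x assume "p \<in> positions t" "p @ [x] \<in> positions t"
    then show "a (c1 p) (c1 (p @ [x])) = 1"
      using cm(3)[of "0 # p" x] T by (simp add: c1_def)
  qed
  have m2: "(PNode ts, c2) \<in> S a N i (n - k)"
  proof (rule S_memI)
    show "card (positions (PNode ts)) = n - k" using cardn by simp
    show "c2 [] = i" using cm(4) by (simp add: c2_def)
    show "c2 \<in> positions (PNode ts) \<rightarrow>\<^sub>E {1..N}"
    proof (rule PiE_I)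
      fix p assume p: "p \<in> positions (PNode ts)"
      show "c2 p \<in> {1..N}"
      proof (cases p)
        case Nil then show ?thesis using cm(2) p by (auto simp: c2_def PiE_def Pi_def)
      next
        case (Cons k' r)
        then have "Suc k' # r \<in> positions T" using p T by simp
        then show ?thesis using cm(2) p Cons by (auto simp: c2_def PiE_def Pi_def)
      qed
    qed (simp add: c2_def)
    fix p x assume p: "p \<in> positions (PNode ts)" and px: "p @ [x] \<in> positions (PNode ts)"
    show "a (c2 p) (c2 (p @ [x])) = 1"
    proof (cases p)
      case Nil
      then have "[Suc x] \<in> positions T" using px T by simp
      then show ?thesis using cm(3)[of "[]" "Suc x"] Nil p px by (simp add: c2_def)
    next
      case (Cons k' r)
      then have "Suc k' # r \<in> positions T" "(Suc k' # r) @ [x] \<in> positions T" using p px T by auto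
      then show ?thesis using cm(3)[of "Suc k' # r" x] Cons p px by (simp add: c2_def)
    qed
  qed
  have P: "Psi ((t, c1), (PNode ts, c2)) = (T, c)"
  proof -
    have "restrict (join c1 c2) (positions T) = c"
    proof
      fix p
      show "restrict (join c1 c2) (positions T) p = c p"
      proof (cases "p \<in> positions T")
        case True
        show ?thesis
        proof (cases p)
          case Nil then show ?thesis by (simp add: c2_def)
        next
          case (Cons k' r)
          then show ?thesis using True T by (cases k') (auto simp: c1_def c2_def)
        qed
      next
        case False
        then show ?thesis using cm(2) by (simp add: PiE_def extensional_def)
      qed
    qed
    then show ?thesis by (simp add: Psi_def T)
  qed
  have "((t, c1), (PNode ts, c2)) \<in> Adec a N i n"
    unfolding Adec_def
  proof (rule UN_I[of k])
    show "k \<in> {1..<n}" using k1 kn by simp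
    have "(t, c1) \<in> (\<Union>j\<in>{j\<in>{1..N}. a i j = 1}. S a N j k)"
      by (rule UN_I[of j]) (use jN aij m1 in auto)
    then show "((t, c1), (PNode ts, c2)) \<in> (\<Union>j\<in>{j\<in>{1..N}. a i j = 1}. S a N j k) \<times> S a N i (n - k)"
      using m2 by (rule mem_Sigma_iff[THEN iffD2, OF conjI])
  qed
  then show ?thesis by (rule image_eqI[where f=Psi, OF P[symmetric]])
qed

lemma S_eq:
  assumes "n \<ge> 2"
  shows "S a N i n = Psi ` Adec a N i n"
proof
  show "S a N i n \<subseteq> Psi ` Adec a N i n" using Psi_onto[OF _ assms] by auto
  show "Psi ` Adec a N i n \<subseteq> S a N i n"
  proof
    fix y assume "y \<in> Psi ` Adec a N i n"
    then obtain z where z: "z \<in> Adec a N i n" and yz: "y = Psi z" by blast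
    obtain t c1 T2 c2 where ze: "z = ((t, c1), (T2, c2))" by (metis prod.collapse)
    from z obtain k where k: "k \<in> {1..<n}" and "z \<in> (\<Union>j\<in>{j\<in>{1..N}. a i j = 1}. S a N j k) \<times> S a N i (n - k)"
      unfolding Adec_def by blast
    then obtain j where j: "a i j = 1" and m1: "(t, c1) \<in> S a N j k" and m2: "(T2, c2) \<in> S a N i (n - k)"
      using ze by blast
    have y: "y = Psi ((t, c1), (T2, c2))" using yz ze by simp
    have "y \<in> S a N i (k + (n - k))" unfolding y by (rule Psi_into[OF m1 m2 j])
    then show "y \<in> S a N i n" using k by simp
  qed
qed

lemma S_finite: "finite (S a N i n)"
proof (induction n arbitrary: i rule: less_induct)
  case (less n)
  show ?case
  proof (cases "n \<ge> 2")
    case True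
    have "finite (Adec a N i n)"
      unfolding Adec_def using less by (auto intro!: finite_UN_I finite_cartesian_product)
    then show ?thesis using S_eq[OF True] by simp
  next
    case False
    then have "n = 0 \<or> n = 1" by auto
    then show ?thesis by (auto simp: S_0 S_1')
  qed
qed

lemma S_card_rec:
  assumes n2: "n \<ge> 2"
  shows "card (S a N i n) = (\<Sum>k\<in>{1..<n}. (\<Sum>j\<in>{j\<in>{1..N}. a i j = 1}. card (S a N j k)) * card (S a N i (n - k)))"
proof -
  have sub: "Adec a N i n \<subseteq> {((t, c1), (T2, c2)). c1 \<in> extensional (positions t) \<and> c2 \<in> extensional (positions T2)}"
  proof (rule subsetI)
    fix z assume z: "z \<in> Adec a N i n"
    obtain t c1 T2 c2 where ze: "z = ((t, c1), (T2, c2))" by (metis prod.collapse)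
    obtain k j where "(t, c1) \<in> S a N j k" "(T2, c2) \<in> S a N i (n - k)"
      using Adec_memD[of t c1 T2 c2 a N i n] z ze by blast
    then show "z \<in> {((t, c1), (T2, c2)). c1 \<in> extensional (positions t) \<and> c2 \<in> extensional (positions T2)}"
      using ze S_ext by simp
  qed
  have "card (S a N i n) = card (Adec a N i n)"
    unfolding S_eq[OF n2] by (rule card_image[OF inj_on_subset[OF Psi_inj sub]])
  also have "\<dots> = (\<Sum>k\<in>{1..<n}. card ((\<Union>j\<in>{j\<in>{1..N}. a i j = 1}. S a N j k) \<times> S a N i (n - k)))"
    unfolding Adec_def
  proof (rule card_UN_disjoint)
    show "finite {1..<n}" by simp
    show "\<forall>k\<in>{1..<n}. finite ((\<Union>j\<in>{j\<in>{1..N}. a i j = 1}. S a N j k) \<times> S a N i (n - k))"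
      by (auto intro!: finite_cartesian_product S_finite)
    show "\<forall>k\<in>{1..<n}. \<forall>k'\<in>{1..<n}. k \<noteq> k' \<longrightarrow>
      ((\<Union>j\<in>{j\<in>{1..N}. a i j = 1}. S a N j k) \<times> S a N i (n - k)) \<inter>
      ((\<Union>j\<in>{j\<in>{1..N}. a i j = 1}. S a N j k') \<times> S a N i (n - k')) = {}"
      by (auto simp: S_def)
  qed
  also have "\<dots> = (\<Sum>k\<in>{1..<n}. (\<Sum>j\<in>{j\<in>{1..N}. a i j = 1}. card (S a N j k)) * card (S a N i (n - k)))"
  proof (rule sum.cong[OF refl])
    fix k assume "k \<in> {1..<n}"
    have "card (\<Union>j\<in>{j\<in>{1..N}. a i j = 1}. S a N j k) = (\<Sum>j\<in>{j\<in>{1..N}. a i j = 1}. card (S a N j k))"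
    proof (rule card_UN_disjoint)
      show "finite {j \<in> {1..N}. a i j = 1}" by simp
      show "\<forall>j\<in>{j \<in> {1..N}. a i j = 1}. finite (S a N j k)" by (simp add: S_finite)
      show "\<forall>j\<in>{j \<in> {1..N}. a i j = 1}. \<forall>j'\<in>{j \<in> {1..N}. a i j = 1}. j \<noteq> j' \<longrightarrow> S a N j k \<inter> S a N j' k = {}"
        by (auto simp: S_def)
    qed
    then show "card ((\<Union>j\<in>{j\<in>{1..N}. a i j = 1}. S a N j k) \<times> S a N i (n - k)) =
      (\<Sum>j\<in>{j\<in>{1..N}. a i j = 1}. card (S a N j k)) * card (S a N i (n - k))"
      by (simp add: card_cartesian_product)
  qed
  finally show ?thesis .
qed

lemma S_card_sym:
  assumes "\<And>j. a i j = a i' j" "i \<in> {1..N}" "i' \<in> {1..N}"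
  shows "card (S a N i n) = card (S a N i' n)"
proof (induction n rule: less_induct)
  case (less n)
  show ?case
  proof (cases "n \<ge> 2")
    case True
    have "n - k < n" if "k \<in> {1..<n}" for k using that by auto
    then show ?thesis using less unfolding S_card_rec[OF True] assms(1) by (intro sum.cong) auto
  next
    case False
    then have "n = 0 \<or> n = 1" by auto
    then show ?thesis using assms by (auto simp: S_0 S_1')
  qed
qed


lemma mult_nth_inner:
  fixes P Q :: "real fps"
  assumes "P $ 0 = 0" "Q $ 0 = 0"
  shows "(P * Q) $ n = (\<Sum>k\<in>{1..<n}. P $ k * Q $ (n - k))"
proof -
  have "(P * Q) $ n = (\<Sum>k=0..n. P $ k * Q $ (n - k))" by (rule fps_mult_nth)
  also have "\<dots> = (\<Sum>k\<in>{1..<n}. P $ k * Q $ (n - k))"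
  proof (rule sum.mono_neutral_right)
    show "finite {0..n}" by simp
    show "{1..<n} \<subseteq> {0..n}" by auto
    show "\<forall>i\<in>{0..n} - {1..<n}. P $ i * Q $ (n - i) = 0"
    proof
      fix i assume "i \<in> {0..n} - {1..<n}"
      then have "i = 0 \<or> i = n" by auto
      then show "P $ i * Q $ (n - i) = 0" using assms by auto
    qed
  qed
  finally show ?thesis .
qed

lemma term_identity:
  fixes l m :: real and n k :: nat
  assumes n2: "n \<ge> 2" and k: "k \<le> n - 1"
  shows "l * (1 / real n * real (n choose k) * real ((2*n-2) choose (n-k-1)) * l ^ (n-k-1) * m ^ k)
       + m * (if k = 0 then 0 else 1 / real (n-1) * real ((n-1) choose (k-1)) * real ((2*n-2) choose (n-k-1))
                         * l ^ (n-k) * m ^ (k-1))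
       = 2 / real n * real (n choose k) * real ((2*n-3) choose (n-k-1)) * l ^ (n-k) * m ^ k"
proof -
  define a where "a = n - k - 1"
  define X where "X = real ((2*n-2) choose a)"
  define Y where "Y = real ((2*n-3) choose a)"
  define cn where "cn = real (n choose k)"
  have nka: "n - k = Suc a" using k n2 unfolding a_def by arith
  have ll: "l * l ^ a = l ^ (n - k)" unfolding nka by simp
  have absorb: "(2*n-2 - a) * ((2*n-2) choose a) = (2*n-2) * ((2*n-3) choose a)"
    using binomial_absorb_comp[of "2*n-2" a] by (simp add: numeral_2_eq_2 numeral_3_eq_3)
  have e1: "real (2*n-2 - a) = real n + real k - 1" using k n2 unfolding a_def by (simp add: of_nat_diff)
  have e2: "real (2*n-2) = 2 * (real n - 1)" using n2 by (simp add: of_nat_diff)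
  have XY: "(real n + real k - 1) * X = 2 * (real n - 1) * Y"
    using arg_cong[OF absorb, of real] unfolding X_def Y_def e1[symmetric] e2[symmetric] of_nat_mult by simp
  have nr: "real n \<ge> 2" using n2 by simp
  show ?thesis
  proof (cases "k = 0")
    case True
    then have "n - k = n" using a_def by auto
    have "(real n - 1) * (X - 2 * Y) = 0" using XY True by (simp add: algebra_simps)
    then have X2: "X = 2 * Y" using nr by simp
    show ?thesis using True nr ll \<open>n - k = n\<close> unfolding X_def[symmetric] Y_def[symmetric] a_def[symmetric] X2
      by (simp add: field_simps)
  next
    case False
    have mm: "m * m ^ (k - 1) = m ^ k" using False by (metis power_eq_if)
    have c1: "real k * cn = real n * real ((n-1) choose (k-1))"
      using times_binomial_minus1_eq[of k n] False unfolding cn_def by (metis of_nat_mult neq0_conv)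
    have cm: "real ((n-1) choose (k-1)) = real k * cn / real n" using c1 nr by (simp add: field_simps)
    have "l * (1 / real n * cn * X * l ^ a * m ^ k) + m * (1 / real (n-1) * real ((n-1) choose (k-1)) * X * l ^ (n-k) * m ^ (k-1))
        = (cn * X / real n + real k * cn / real n * X / real (n-1)) * (l ^ (n - k) * m ^ k)"
      unfolding cm ll[symmetric] mm[symmetric] by (simp add: algebra_simps)
    also have "(cn * X / real n + real k * cn / real n * X / real (n-1)) = cn * ((real n - 1 + real k) * X) / (real n * (real n - 1))"
      using nr n2 by (simp add: field_simps of_nat_diff)
    also have "(real n - 1 + real k) * X = 2 * (real n - 1) * Y" using XY by (simp add: algebra_simps)
    also have "cn * (2 * (real n - 1) * Y) / (real n * (real n - 1)) = 2 / real n * cn * Y" using nr by (simp add: field_simps)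
    finally show ?thesis using False unfolding X_def[symmetric] Y_def[symmetric] a_def[symmetric] cn_def[symmetric]
      by (simp add: mult.assoc)
  qed
qed

lemma tAi_S: "tAi a N i n = card (S a N i n)"
  by (simp add: tAi_def S_def)

lemma tA_S: "tA a N n = (\<Sum>i\<in>{1..N}. card (S a N i n))"
proof -
  have "{(T, c). card (positions T) = n \<and> c \<in> colorings a N T} = (\<Union>i\<in>{1..N}. S a N i n)"
  proof (rule set_eqI)
    fix x :: "ptree \<times> (nat list \<Rightarrow> nat)"
    obtain T c where xe: "x = (T, c)" by (metis prod.collapse)
    have "c \<in> colorings a N T \<Longrightarrow> c [] \<in> {1..N}"
      unfolding colorings_iff by (auto simp: PiE_def Pi_def)
    then show "x \<in> {(T, c). card (positions T) = n \<and> c \<in> colorings a N T} \<longleftrightarrow> x \<in> (\<Union>i\<in>{1..N}. S a N i n)"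
      unfolding xe S_def by auto
  qed
  then have "tA a N n = card (\<Union>i\<in>{1..N}. S a N i n)" by (simp add: tA_def)
  also have "\<dots> = (\<Sum>i\<in>{1..N}. card (S a N i n))"
  proof (rule card_UN_disjoint)
    show "finite {1..N}" by simp
    show "\<forall>i\<in>{1..N}. finite (S a N i n)" by (simp add: S_finite)
    show "\<forall>i\<in>{1..N}. \<forall>j\<in>{1..N}. i \<noteq> j \<longrightarrow> S a N i n \<inter> S a N j n = {}"
      by (auto simp: S_def)
  qed
  finally show ?thesis .
qed

theorem theorem33:
  fixes l m n :: nat
  assumes "l \<ge> 1" "m \<ge> 1" "n \<ge> 1"
  shows "(n \<ge> 2 \<longrightarrow> real (tA (Alm l m) (l + m) n) =
           (\<Sum>k=0..n-1. 2 / real n * real (n choose k) * real ((2*n-3) choose (n-k-1))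
                         * real l ^ (n-k) * real m ^ k))
    \<and> (\<forall>i. 1 \<le> i \<and> i \<le> l \<longrightarrow> real (tAi (Alm l m) (l + m) i n) =
           (\<Sum>k=0..n-1. 1 / real n * real (n choose k) * real ((2*n-2) choose (n-k-1))
                         * real l ^ (n-k-1) * real m ^ k))
    \<and> (\<forall>i. l + 1 \<le> i \<and> i \<le> l + m \<and> n \<ge> 2 \<longrightarrow> real (tAi (Alm l m) (l + m) i n) =
           (\<Sum>k=1..n-1. 1 / real (n-1) * real ((n-1) choose (k-1)) * real ((2*n-2) choose (n-k-1))
                         * real l ^ (n-k) * real m ^ (k-1)))"
proof -
  have l1: "l \<ge> 1" and m1: "m \<ge> 1" and n1: "n \<ge> 1" using assms by auto
  let ?a = "Alm l m" and ?N = "l + m"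
  have rowL: "Alm l m i j = Alm l m 1 j" if "i \<in> {1..l}" for i j using that l1 by (simp add: Alm_def)
  have rowM: "Alm l m i j = Alm l m (l+1) j" if "i \<in> {l+1..l+m}" for i j using that by (simp add: Alm_def)
  have symL: "card (S ?a ?N i k) = card (S ?a ?N 1 k)" if "i \<in> {1..l}" for i k
  proof (rule S_card_sym)
    fix j show "Alm l m i j = Alm l m 1 j" by (rule rowL[OF that])
  next
    show "i \<in> {1..l+m}" using that by auto
  next
    show "1 \<in> {1..l+m}" using l1 by auto
  qed
  have symM: "card (S ?a ?N i k) = card (S ?a ?N (l+1) k)" if "i \<in> {l+1..l+m}" for i k
  proof (rule S_card_sym)
    fix j show "Alm l m i j = Alm l m (l+1) j" by (rule rowM[OF that])
  next
    show "i \<in> {1..l+m}" using that by auto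
  next
    show "l + 1 \<in> {1..l+m}" using m1 by auto
  qed
  define cf where "cf k = card (S ?a ?N 1 k)" for k
  define cg where "cg k = card (S ?a ?N (l+1) k)" for k
  have sumL: "(\<Sum>j\<in>{1..l}. card (S ?a ?N j k)) = l * cf k" for k
  proof -
    have "(\<Sum>j\<in>{1..l}. card (S ?a ?N j k)) = (\<Sum>j\<in>{1..l}. cf k)"
    proof (rule sum.cong[OF refl])
      fix j assume "j \<in> {1..l}"
      then show "card (S ?a ?N j k) = cf k" unfolding cf_def by (rule symL)
    qed
    then show ?thesis by simp
  qed
  have sumall: "(\<Sum>j\<in>{1..l+m}. card (S ?a ?N j k)) = l * cf k + m * cg k" for k
  proof -
    have u: "{1..l+m} = {1..l} \<union> {l+1..l+m}" by auto
    have "(\<Sum>j\<in>{1..l+m}. card (S ?a ?N j k)) = (\<Sum>j\<in>{1..l}. card (S ?a ?N j k)) + (\<Sum>j\<in>{l+1..l+m}. card (S ?a ?N j k))"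
      unfolding u by (rule sum.union_disjoint) auto
    also have "(\<Sum>j\<in>{l+1..l+m}. card (S ?a ?N j k)) = (\<Sum>j\<in>{l+1..l+m}. cg k)"
    proof (rule sum.cong[OF refl])
      fix j assume "j \<in> {l+1..l+m}"
      then show "card (S ?a ?N j k) = cg k" unfolding cg_def by (rule symM)
    qed
    also have "\<dots> = m * cg k" by simp
    finally show ?thesis using sumL by simp
  qed
  have JL: "{j \<in> {1..?N}. ?a 1 j = 1} = {1..l+m}" using l1 by (auto simp: Alm_def)
  have JM: "{j \<in> {1..?N}. ?a (l+1) j = 1} = {1..l}" by (auto simp: Alm_def)
  have recF: "cf k = (\<Sum>i\<in>{1..<k}. (l * cf i + m * cg i) * cf (k - i))" if "k \<ge> 2" for k
    unfolding cf_def[of k] S_card_rec[OF that] JL sumall by (simp add: cf_def)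
  have recG: "cg k = (\<Sum>i\<in>{1..<k}. (l * cf i) * cg (k - i))" if "k \<ge> 2" for k
    unfolding cg_def[of k] S_card_rec[OF that] JM sumL by (simp add: cg_def)
  have cf0: "cf 0 = 0" and cg0: "cg 0 = 0" by (simp_all add: cf_def cg_def S_0)
  have cf1: "cf 1 = 1" using l1 by (simp add: cf_def S_1')
  have cg1: "cg 1 = 1" using m1 by (simp add: cg_def S_1' S_1)
  define F where "F = Abs_fps (\<lambda>k. real (cf k))"
  define G where "G = Abs_fps (\<lambda>k. real (cg k))"
  have F0: "F $ 0 = 0" and G0: "G $ 0 = 0" by (simp_all add: F_def G_def cf0 cg0)
  have EF: "F = fps_X + (fps_const (real l) * F + fps_const (real m) * G) * F"
  proof (rule fps_ext)
    fix k
    have "(fps_X + (fps_const (real l) * F + fps_const (real m) * G) * F) $ k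
        = (if k = 1 then 1 else 0) + (\<Sum>i\<in>{1..<k}. (real l * real (cf i) + real m * real (cg i)) * real (cf (k - i)))"
      by (simp add: mult_nth_inner F0 G0) (simp add: F_def G_def)
    also have "\<dots> = F $ k"
    proof (cases "k \<ge> 2")
      case True
      then show ?thesis by (simp add: F_def recF[OF True])
    next
      case False
      then have "k = 0 \<or> k = 1" by auto
      then show ?thesis using cf1 by (auto simp: F_def cf0)
    qed
    finally show "F $ k = (fps_X + (fps_const (real l) * F + fps_const (real m) * G) * F) $ k" by simp
  qed
  have EG: "G = fps_X + fps_const (real l) * F * G"
  proof (rule fps_ext)
    fix k
    have "(fps_X + fps_const (real l) * F * G) $ k
        = (if k = 1 then 1 else 0) + (\<Sum>i\<in>{1..<k}. (real l * real (cf i)) * real (cg (k - i)))"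
      by (simp add: mult_nth_inner F0 G0) (simp add: F_def G_def)
    also have "\<dots> = G $ k"
    proof (cases "k \<ge> 2")
      case True
      then show ?thesis by (simp add: G_def recG[OF True])
    next
      case False
      then have "k = 0 \<or> k = 1" by auto
      then show ?thesis using cg1 by (auto simp: G_def cg0)
    qed
    finally show "G $ k = (fps_X + fps_const (real l) * F * G) $ k" by simp
  qed
  note AF = alg_main(1)[OF F0 G0 EF EG n1]
  note AG = alg_main(2)[OF F0 G0 EF EG n1]
  have Fn: "real (cf n) = F $ n" by (simp add: F_def)
  have Gn: "real (cg n) = G $ n" by (simp add: G_def)
  show ?thesis
  proof (intro conjI allI impI)
    assume n2: "n \<ge> 2"
    have "real (tA ?a ?N n) = real l * F $ n + real m * G $ n"
      unfolding tA_S sumall Fn[symmetric] Gn[symmetric] by simp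
    also have "\<dots> = (\<Sum>k=0..n-1. 2 / real n * real (n choose k) * real ((2*n-3) choose (n-k-1))
                         * real l ^ (n-k) * real m ^ k)"
    proof -
      let ?A = "\<lambda>k. 1 / real n * real (n choose k) * real ((2*n-2) choose (n-k-1)) * real l ^ (n-k-1) * real m ^ k"
      let ?B = "\<lambda>k. 1 / real (n-1) * real ((n-1) choose (k-1)) * real ((2*n-2) choose (n-k-1)) * real l ^ (n-k) * real m ^ (k-1)"
      have "(\<Sum>k=0..n-1. if k = 0 then 0 else ?B k) = (if 0 = (0::nat) then 0 else ?B 0) + (\<Sum>k=Suc 0..n-1. if k = 0 then 0 else ?B k)"
        by (rule sum.atLeast_Suc_atMost) simp
      also have "\<dots> = (\<Sum>k=1..n-1. ?B k)"
        by (simp only: simp_thms(6) if_True add_0_left One_nat_def[symmetric]) (rule sum.cong, auto)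
      finally have "(\<Sum>k=1..n-1. ?B k) = (\<Sum>k=0..n-1. if k = 0 then 0 else ?B k)" by (rule sym)
      then have "real l * F $ n + real m * G $ n = (\<Sum>k=0..n-1. real l * ?A k + real m * (if k = 0 then 0 else ?B k))"
        unfolding AF AG[OF n2] by (simp add: sum_distrib_left sum.distrib)
      also have "\<dots> = (\<Sum>k=0..n-1. 2 / real n * real (n choose k) * real ((2*n-3) choose (n-k-1))
                         * real l ^ (n-k) * real m ^ k)"
        by (rule sum.cong[OF refl]) (rule term_identity[OF n2], simp)
      finally show ?thesis .
    qed
    finally show "real (tA ?a ?N n) = (\<Sum>k=0..n-1. 2 / real n * real (n choose k) * real ((2*n-3) choose (n-k-1))
                         * real l ^ (n-k) * real m ^ k)" .
  next
    fix i assume i: "1 \<le> i \<and> i \<le> l"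
    have "card (S ?a ?N i n) = card (S ?a ?N 1 n)" by (rule symL) (use i in simp)
    then have "real (tAi ?a ?N i n) = real (cf n)" unfolding tAi_S cf_def by simp
    then show "real (tAi ?a ?N i n) = (\<Sum>k=0..n-1. 1 / real n * real (n choose k) * real ((2*n-2) choose (n-k-1))
                         * real l ^ (n-k-1) * real m ^ k)" using Fn AF by simp
  next
    fix i assume i: "l + 1 \<le> i \<and> i \<le> l + m \<and> n \<ge> 2"
    have "card (S ?a ?N i n) = card (S ?a ?N (l+1) n)" by (rule symM) (use i in simp)
    then have "real (tAi ?a ?N i n) = real (cg n)" unfolding tAi_S cg_def by simp
    then show "real (tAi ?a ?N i n) = (\<Sum>k=1..n-1. 1 / real (n-1) * real ((n-1) choose (k-1)) * real ((2*n-2) choose (n-k-1))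
                         * real l ^ (n-k) * real m ^ (k-1))" using Gn AG i by simp
  qed
qed


end
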